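(* Let ${\tt G}$ be a digraph, $P\subseteq SSG({\tt G})$ a downward closed (or upward closed) sub-poset, $\mathbf A$ an additive category and $\mathcal F\colon\mathbf P\to\mathbf A$ a covariant functor. Then the cochain complex $(C^*_{\mathcal F}(P),d^* )$ does not depend, up to isomorphism of cochain complexes, on the choice of the sign assignment on $P$ used to define it.
   Context: A digraph ${\tt G}=(V,E)$ has finite $V$ and $E\subseteq(V\times V)\setminus\{(v,v)\}$. $SSG({\tt G})$ is the poset of spanning subgraphs (all vertices, any subset of edges) ordered by inclusion of edge sets; in it ${\tt H}\prec{\tt H}'$ (covering) iff ${\tt H}'$ has exactly one more edge. A sub-poset $P$ is downward closed if $h\le h'\in P$ implies $h\in P$, upward closed if $P\ni h'\le h$ implies $h\in P$. A sign assignment on $P$ assigns $\epsilon({\tt H},{\tt H}')\in\mathbb Z_2$ to each covering pair in $P$ so that around every square ${\tt H}\prec{\tt H}_1,{\tt H}_2\prec{\tt H}''$ ($ {\tt H}_1\neq{\tt H}_2$) one has $\epsilon({\tt H},{\tt H}_1)+\epsilon({\tt H}_1,{\tt H}'')\equiv\epsilon({\tt H},{\tt H}_2)+\epsilon({\tt H}_2,{\tt H}'')+1\pmod 2$. $\mathbf P$ is the category with objects the elements of $P$ and a unique morphism ${\tt H}\to{\tt H}'$ iff ${\tt H}\le{\tt H}'$. Given a sign assignment $\epsilon$, $C^n_{\mathcal F}(P)=\bigoplus_{{\tt H}\in P,\ \ell({\tt H})=n}\mathcal F({\tt H})$ with $\ell({\tt H})=\#E({\tt H})-\min_{{\tt H}'\in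 P}\#E({\tt H}')$ and $d^n=\sum_{{\tt H}\prec{\tt H}'\text{ in }P,\ \ell({\tt H})=n}(-1)^{\epsilon({\tt H},{\tt H}')}\mathcal F({\tt H}\prec{\tt H}')$. *)

theory Defs
  imports Main
begin

(* A digraph G = (V,E): finite V, E a set of ordered pairs without loops.
   A spanning subgraph is identified with its edge set H \<subseteq> E, so SSG(G) = Pow E
   ordered by inclusion. *)
definition digraph :: "'v set \<Rightarrow> ('v \<times> 'v) set \<Rightarrow> bool" where
  "digraph V E \<longleftrightarrow> finite V \<and> E \<subseteq> (V \<times> V) - {(v, v) | v. True}"

definition covers :: "'a set \<Rightarrow> 'a set \<Rightarrow> bool" where
  "covers H H' \<longleftrightarrow> H \<subseteq> H' \<and> card (H' - H) = 1"

definition down_closed :: "'a set \<Rightarrow> 'a set set \<Rightarrow> bool" where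
  "down_closed E P \<longleftrightarrow> P \<subseteq> Pow E \<and> (\<forall>H H'. H \<subseteq> H' \<and> H' \<in> P \<longrightarrow> H \<in> P)"

definition up_closed :: "'a set \<Rightarrow> 'a set set \<Rightarrow> bool" where
  "up_closed E P \<longleftrightarrow> P \<subseteq> Pow E \<and> (\<forall>H H'. H' \<in> P \<and> H' \<subseteq> H \<and> H \<subseteq> E \<longrightarrow> H \<in> P)"

(* Sign assignment with values in Z_2 = bool (addition = exclusive or) *)
definition sign_assignment :: "'a set set \<Rightarrow> ('a set \<Rightarrow> 'a set \<Rightarrow> bool) \<Rightarrow> bool" where
  "sign_assignment P eps \<longleftrightarrow>
     (\<forall>H H1 H2 H''. H \<in> P \<and> H1 \<in> P \<and> H2 \<in> P \<and> H'' \<in> P \<and>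
        covers H H1 \<and> covers H H2 \<and> covers H1 H'' \<and> covers H2 H'' \<and> H1 \<noteq> H2 \<longrightarrow>
        ((eps H H1 \<noteq> eps H1 H'') \<longleftrightarrow> \<not> (eps H H2 \<noteq> eps H2 H'')))"

definition additive_category ::
  "'o set \<Rightarrow> ('o \<Rightarrow> 'o \<Rightarrow> 'm set) \<Rightarrow> ('m \<Rightarrow> 'm \<Rightarrow> 'm) \<Rightarrow> ('o \<Rightarrow> 'm)
   \<Rightarrow> ('o \<Rightarrow> 'o \<Rightarrow> 'm) \<Rightarrow> ('m \<Rightarrow> 'm \<Rightarrow> 'm) \<Rightarrow> ('m \<Rightarrow> 'm) \<Rightarrow> bool" where
  "additive_category Ob Hom cmp idn zer add neg \<longleftrightarrow>
     (\<forall>X Y Z f g. X \<in> Ob \<and> Y \<in> Ob \<and> Z \<in> Ob \<and> f \<in> Hom X Y \<and> g \<in> Hom Y Z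
        \<longrightarrow> cmp g f \<in> Hom X Z)
   \<and> (\<forall>W X Y Z f g h. W \<in> Ob \<and> X \<in> Ob \<and> Y \<in> Ob \<and> Z \<in> Ob \<and>
        f \<in> Hom W X \<and> g \<in> Hom X Y \<and> h \<in> Hom Y Z
        \<longrightarrow> cmp h (cmp g f) = cmp (cmp h g) f)
   \<and> (\<forall>X. X \<in> Ob \<longrightarrow> idn X \<in> Hom X X)
   \<and> (\<forall>X Y f. X \<in> Ob \<and> Y \<in> Ob \<and> f \<in> Hom X Y \<longrightarrow> cmp f (idn X) = f \<and> cmp (idn Y) f = f)
   \<and> (\<forall>X Y. X \<in> Ob \<and> Y \<in> Ob \<longrightarrow>
        zer X Y \<in> Hom X Y
      \<and> (\<forall>f\<in>Hom X Y. \<forall>g\<in>Hom X Y. add f g \<in> Hom X Y \<and> add f g = add g f)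
      \<and> (\<forall>f\<in>Hom X Y. \<forall>g\<in>Hom X Y. \<forall>h\<in>Hom X Y. add (add f g) h = add f (add g h))
      \<and> (\<forall>f\<in>Hom X Y. add f (zer X Y) = f \<and> neg f \<in> Hom X Y \<and> add f (neg f) = zer X Y))
   \<and> (\<forall>X Y Z. X \<in> Ob \<and> Y \<in> Ob \<and> Z \<in> Ob \<longrightarrow>
        (\<forall>f\<in>Hom X Y. \<forall>f'\<in>Hom X Y. \<forall>g\<in>Hom Y Z. \<forall>g'\<in>Hom Y Z.
           cmp g (add f f') = add (cmp g f) (cmp g f') \<and>
           cmp (add g g') f = add (cmp g f) (cmp g' f)))
   \<and> (\<exists>Z\<in>Ob. \<forall>X\<in>Ob. Hom Z X = {zer Z X} \<and> Hom X Z = {zer X Z})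
   \<and> (\<forall>X Y. X \<in> Ob \<and> Y \<in> Ob \<longrightarrow>
        (\<exists>S\<in>Ob. \<exists>i1\<in>Hom X S. \<exists>i2\<in>Hom Y S. \<exists>p1\<in>Hom S X. \<exists>p2\<in>Hom S Y.
           cmp p1 i1 = idn X \<and> cmp p2 i2 = idn Y \<and>
           cmp p2 i1 = zer X Y \<and> cmp p1 i2 = zer Y X \<and>
           add (cmp i1 p1) (cmp i2 p2) = idn S))"

(* Covariant functor from the poset category of P (unique morphism H \<rightarrow> H' iff H \<subseteq> H')
   to the category; Fm H H' is the image of the morphism H \<rightarrow> H'. *)
definition functor_on ::
  "'a set set \<Rightarrow> 'o set \<Rightarrow> ('o \<Rightarrow> 'o \<Rightarrow> 'm set) \<Rightarrow> ('m \<Rightarrow> 'm \<Rightarrow> 'm) \<Rightarrow> ('o \<Rightarrow> 'm)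
   \<Rightarrow> ('a set \<Rightarrow> 'o) \<Rightarrow> ('a set \<Rightarrow> 'a set \<Rightarrow> 'm) \<Rightarrow> bool" where
  "functor_on P Ob Hom cmp idn Fo Fm \<longleftrightarrow>
     (\<forall>H\<in>P. Fo H \<in> Ob \<and> Fm H H = idn (Fo H))
   \<and> (\<forall>H\<in>P. \<forall>H'\<in>P. H \<subseteq> H' \<longrightarrow> Fm H H' \<in> Hom (Fo H) (Fo H'))
   \<and> (\<forall>H\<in>P. \<forall>H'\<in>P. \<forall>H''\<in>P. H \<subseteq> H' \<and> H' \<subseteq> H'' \<longrightarrow> Fm H H'' = cmp (Fm H' H'') (Fm H H'))"

definition lev :: "'a set set \<Rightarrow> 'a set \<Rightarrow> nat" where
  "lev P H = card H - Min (card ` P)"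

definition deg :: "'a set set \<Rightarrow> nat \<Rightarrow> 'a set set" where
  "deg P n = {H \<in> P. lev P H = n}"

definition msum :: "('m \<Rightarrow> 'm \<Rightarrow> 'm) \<Rightarrow> 'm \<Rightarrow> 'b set \<Rightarrow> ('b \<Rightarrow> 'm) \<Rightarrow> 'm" where
  "msum add z A f = Finite_Set.fold (\<lambda>x acc. add (f x) acc) z A"

(* Morphisms between finite direct sums \<Oplus>_{H \<in> deg P n} F(H) are represented by their matrices
   M H' H \<in> Hom (F H) (F H'). Composition of matrices through the degree-m summand: *)
definition mcomp ::
  "('m \<Rightarrow> 'm \<Rightarrow> 'm) \<Rightarrow> ('m \<Rightarrow> 'm \<Rightarrow> 'm) \<Rightarrow> ('o \<Rightarrow> 'o \<Rightarrow> 'm) \<Rightarrow> ('a set \<Rightarrow> 'o)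
   \<Rightarrow> 'a set set \<Rightarrow> nat \<Rightarrow> ('a set \<Rightarrow> 'a set \<Rightarrow> 'm) \<Rightarrow> ('a set \<Rightarrow> 'a set \<Rightarrow> 'm)
   \<Rightarrow> 'a set \<Rightarrow> 'a set \<Rightarrow> 'm" where
  "mcomp cmp add zer Fo P m N M = (\<lambda>H'' H.
     msum add (zer (Fo H) (Fo H'')) (deg P m) (\<lambda>H'. cmp (N H'' H') (M H' H)))"

definition idm :: "('o \<Rightarrow> 'm) \<Rightarrow> ('o \<Rightarrow> 'o \<Rightarrow> 'm) \<Rightarrow> ('a set \<Rightarrow> 'o) \<Rightarrow> 'a set \<Rightarrow> 'a set \<Rightarrow> 'm" where
  "idm idn zer Fo = (\<lambda>H' H. if H' = H then idn (Fo H) else zer (Fo H) (Fo H'))"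

definition diffm ::
  "('m \<Rightarrow> 'm) \<Rightarrow> ('o \<Rightarrow> 'o \<Rightarrow> 'm) \<Rightarrow> ('a set \<Rightarrow> 'o) \<Rightarrow> ('a set \<Rightarrow> 'a set \<Rightarrow> 'm)
   \<Rightarrow> ('a set \<Rightarrow> 'a set \<Rightarrow> bool) \<Rightarrow> 'a set \<Rightarrow> 'a set \<Rightarrow> 'm" where
  "diffm neg zer Fo Fm eps = (\<lambda>H' H.
     if covers H H' then (if eps H H' then neg (Fm H H') else Fm H H')
     else zer (Fo H) (Fo H'))"

end

theory Submission
  imports Defs
begin

locale addcat =
  fixes Ob :: "'o set" and Hom :: "'o \<Rightarrow> 'o \<Rightarrow> 'm set" and cmp :: "'m \<Rightarrow> 'm \<Rightarrow> 'm"
    and idn :: "'o \<Rightarrow> 'm" and zer :: "'o \<Rightarrow> 'o \<Rightarrow> 'm" and add :: "'m \<Rightarrow> 'm \<Rightarrow> 'm"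
    and neg :: "'m \<Rightarrow> 'm"
  assumes AC: "additive_category Ob Hom cmp idn zer add neg"
begin

lemma ACD1: "\<forall>X Y Z f g. X \<in> Ob \<and> Y \<in> Ob \<and> Z \<in> Ob \<and> f \<in> Hom X Y \<and> g \<in> Hom Y Z
        \<longrightarrow> cmp g f \<in> Hom X Z"
  using AC unfolding additive_category_def by (elim conjE) assumption
lemma ACD2: "\<forall>X. X \<in> Ob \<longrightarrow> idn X \<in> Hom X X"
  using AC unfolding additive_category_def by (elim conjE) assumption
lemma ACD3: "\<forall>X Y f. X \<in> Ob \<and> Y \<in> Ob \<and> f \<in> Hom X Y \<longrightarrow> cmp f (idn X) = f \<and> cmp (idn Y) f = f"
  using AC unfolding additive_category_def by (elim conjE) assumption
lemma ACD4: "\<forall>X Y. X \<in> Ob \<and> Y \<in> Ob \<longrightarrow>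
        zer X Y \<in> Hom X Y
      \<and> (\<forall>f\<in>Hom X Y. \<forall>g\<in>Hom X Y. add f g \<in> Hom X Y \<and> add f g = add g f)
      \<and> (\<forall>f\<in>Hom X Y. \<forall>g\<in>Hom X Y. \<forall>h\<in>Hom X Y. add (add f g) h = add f (add g h))
      \<and> (\<forall>f\<in>Hom X Y. add f (zer X Y) = f \<and> neg f \<in> Hom X Y \<and> add f (neg f) = zer X Y)"
  using AC unfolding additive_category_def by (elim conjE) assumption
lemma ACD5: "\<forall>X Y Z. X \<in> Ob \<and> Y \<in> Ob \<and> Z \<in> Ob \<longrightarrow>
        (\<forall>f\<in>Hom X Y. \<forall>f'\<in>Hom X Y. \<forall>g\<in>Hom Y Z. \<forall>g'\<in>Hom Y Z.
           cmp g (add f f') = add (cmp g f) (cmp g f') \<and>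
           cmp (add g g') f = add (cmp g f) (cmp g' f))"
  using AC unfolding additive_category_def by (elim conjE) assumption
lemmas ACD = ACD1 ACD2 ACD3 ACD4 ACD5

lemma cmp_hom: "X \<in> Ob \<Longrightarrow> Y \<in> Ob \<Longrightarrow> Z \<in> Ob \<Longrightarrow> f \<in> Hom X Y \<Longrightarrow> g \<in> Hom Y Z \<Longrightarrow> cmp g f \<in> Hom X Z"
  using ACD1 by blast
lemma idn_hom: "X \<in> Ob \<Longrightarrow> idn X \<in> Hom X X"
  using ACD2 by blast
lemma idn_r: "X \<in> Ob \<Longrightarrow> Y \<in> Ob \<Longrightarrow> f \<in> Hom X Y \<Longrightarrow> cmp f (idn X) = f"
  using ACD3 by blast
lemma idn_l: "X \<in> Ob \<Longrightarrow> Y \<in> Ob \<Longrightarrow> f \<in> Hom X Y \<Longrightarrow> cmp (idn Y) f = f"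
  using ACD3 by blast
lemma zer_hom: "X \<in> Ob \<Longrightarrow> Y \<in> Ob \<Longrightarrow> zer X Y \<in> Hom X Y"
  using ACD4 by blast
lemma add_hom: "X \<in> Ob \<Longrightarrow> Y \<in> Ob \<Longrightarrow> f \<in> Hom X Y \<Longrightarrow> g \<in> Hom X Y \<Longrightarrow> add f g \<in> Hom X Y"
  using ACD4 by blast
lemma add_comm: "X \<in> Ob \<Longrightarrow> Y \<in> Ob \<Longrightarrow> f \<in> Hom X Y \<Longrightarrow> g \<in> Hom X Y \<Longrightarrow> add f g = add g f"
  using ACD4 by blast
lemma add_assoc: "X \<in> Ob \<Longrightarrow> Y \<in> Ob \<Longrightarrow> f \<in> Hom X Y \<Longrightarrow> g \<in> Hom X Y \<Longrightarrow> h \<in> Hom X Y \<Longrightarrow> add (add f g) h = add f (add g h)"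
  using ACD4 by blast
lemma add_zer: "X \<in> Ob \<Longrightarrow> Y \<in> Ob \<Longrightarrow> f \<in> Hom X Y \<Longrightarrow> add f (zer X Y) = f"
  using ACD4 by blast
lemma neg_hom: "X \<in> Ob \<Longrightarrow> Y \<in> Ob \<Longrightarrow> f \<in> Hom X Y \<Longrightarrow> neg f \<in> Hom X Y"
  using ACD4 by blast
lemma add_neg: "X \<in> Ob \<Longrightarrow> Y \<in> Ob \<Longrightarrow> f \<in> Hom X Y \<Longrightarrow> add f (neg f) = zer X Y"
  using ACD4 by blast
lemma cmp_add_r: "X \<in> Ob \<Longrightarrow> Y \<in> Ob \<Longrightarrow> Z \<in> Ob \<Longrightarrow> f \<in> Hom X Y \<Longrightarrow> f' \<in> Hom X Y \<Longrightarrow> g \<in> Hom Y Z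
  \<Longrightarrow> cmp g (add f f') = add (cmp g f) (cmp g f')"
  using ACD5 by blast
lemma cmp_add_l: "X \<in> Ob \<Longrightarrow> Y \<in> Ob \<Longrightarrow> Z \<in> Ob \<Longrightarrow> f \<in> Hom X Y \<Longrightarrow> g' \<in> Hom Y Z \<Longrightarrow> g \<in> Hom Y Z
  \<Longrightarrow> cmp (add g g') f = add (cmp g f) (cmp g' f)"
  using ACD5 by blast

lemma cancel: assumes "X \<in> Ob" "Y \<in> Ob" "x \<in> Hom X Y" "add x x = x" shows "x = zer X Y"
proof -
  have "add (add x x) (neg x) = add x (add x (neg x))"
    by (rule add_assoc) (use assms neg_hom in auto)
  then show ?thesis using assms add_neg add_zer by metis
qed

lemma cmp_zer_r: assumes "X \<in> Ob" "Y \<in> Ob" "Z \<in> Ob" "g \<in> Hom Y Z"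
  shows "cmp g (zer X Y) = zer X Z"
proof -
  have "add (zer X Y) (zer X Y) = zer X Y" using assms by (simp add: add_zer zer_hom)
  then have "cmp g (zer X Y) = add (cmp g (zer X Y)) (cmp g (zer X Y))"
    using assms cmp_add_r[of X Y Z "zer X Y" "zer X Y" g] zer_hom by metis
  then show ?thesis using cancel assms cmp_hom zer_hom by metis
qed

lemma cmp_zer_l: assumes "X \<in> Ob" "Y \<in> Ob" "Z \<in> Ob" "f \<in> Hom X Y"
  shows "cmp (zer Y Z) f = zer X Z"
proof -
  have "add (zer Y Z) (zer Y Z) = zer Y Z" using assms by (simp add: add_zer zer_hom)
  then have "cmp (zer Y Z) f = add (cmp (zer Y Z) f) (cmp (zer Y Z) f)"
    using assms cmp_add_l[of X Y Z f "zer Y Z" "zer Y Z"] zer_hom by metis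
  then show ?thesis using cancel assms cmp_hom zer_hom by metis
qed

lemma neg_unique: assumes "X \<in> Ob" "Y \<in> Ob" "a \<in> Hom X Y" "b \<in> Hom X Y" "add a b = zer X Y"
  shows "b = neg a"
proof -
  have "b = add b (add a (neg a))" using assms by (simp add: add_neg add_zer)
  also have "\<dots> = add (add a b) (neg a)" using assms neg_hom add_assoc add_comm by metis
  also have "\<dots> = neg a" using assms neg_hom add_comm add_zer zer_hom by metis
  finally show ?thesis .
qed

lemma neg_neg: assumes "X \<in> Ob" "Y \<in> Ob" "a \<in> Hom X Y" shows "neg (neg a) = a"
  using neg_unique[of X Y "neg a" a] assms neg_hom add_neg add_comm by metis

lemma cmp_neg_r: assumes "X \<in> Ob" "Y \<in> Ob" "Z \<in> Ob" "f \<in> Hom X Y" "g \<in> Hom Y Z"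
  shows "cmp g (neg f) = neg (cmp g f)"
proof -
  have "add (cmp g f) (cmp g (neg f)) = cmp g (add f (neg f))"
    using assms cmp_add_r neg_hom by metis
  also have "\<dots> = zer X Z" using assms add_neg cmp_zer_r by metis
  finally show ?thesis using neg_unique assms cmp_hom neg_hom by metis
qed

lemma cmp_neg_l: assumes "X \<in> Ob" "Y \<in> Ob" "Z \<in> Ob" "f \<in> Hom X Y" "g \<in> Hom Y Z"
  shows "cmp (neg g) f = neg (cmp g f)"
proof -
  have "add (cmp g f) (cmp (neg g) f) = cmp (add g (neg g)) f"
    using assms cmp_add_l neg_hom by metis
  also have "\<dots> = zer X Z" using assms add_neg cmp_zer_l by metis
  finally show ?thesis using neg_unique assms cmp_hom neg_hom by metis
qed

lemma msum_insert:
  assumes "X \<in> Ob" "Y \<in> Ob" "finite A" "x \<notin> A" "\<forall>a\<in>insert x A. f a \<in> Hom X Y"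
  shows "msum add (zer X Y) (insert x A) f = add (f x) (msum add (zer X Y) A f)
    \<and> msum add (zer X Y) A f \<in> Hom X Y"
proof -
  define g' where "g' = (\<lambda>a acc. add (f a) (if acc \<in> Hom X Y then acc else zer X Y))"
  have cf: "comp_fun_commute_on (insert x A) g'"
  proof
    fix a b assume ab: "a \<in> insert x A" "b \<in> insert x A"
    show "g' b \<circ> g' a = g' a \<circ> g' b"
    proof
      fix acc
      define t where "t = (if acc \<in> Hom X Y then acc else zer X Y)"
      have t: "t \<in> Hom X Y" using assms zer_hom unfolding t_def by auto
      have fa: "f a \<in> Hom X Y" and fb: "f b \<in> Hom X Y" using ab assms by auto
      have "g' b (g' a acc) = add (f b) (add (f a) t)"
        using t fa assms add_hom unfolding g'_def t_def by auto
      also have "\<dots> = add (f a) (add (f b) t)"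
        using t fa fb assms add_assoc add_comm by metis
      also have "\<dots> = g' a (g' b acc)"
        using t fb assms add_hom unfolding g'_def t_def by auto
      finally show "(g' b \<circ> g' a) acc = (g' a \<circ> g' b) acc" by simp
    qed
  qed
  have eq: "msum add (zer X Y) B f = Finite_Set.fold g' (zer X Y) B" if "B \<subseteq> insert x A" for B
    unfolding msum_def
    by (rule fold_closed_eq[where B="Hom X Y"]) (use that assms zer_hom add_hom in \<open>auto simp: g'_def\<close>)
  have inA: "msum add (zer X Y) B f \<in> Hom X Y" if "B \<subseteq> insert x A" "finite B" for B
    using that(2,1)
  proof (induction B rule: finite_induct)
    case empty then show ?case by (simp add: msum_def assms zer_hom)
  next
    case (insert b B)
    then have "msum add (zer X Y) (insert b B) f = g' b (Finite_Set.fold g' (zer X Y) B)"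
      using eq comp_fun_commute_on.fold_insert[OF cf] by auto
    also have "\<dots> = add (f b) (msum add (zer X Y) B f)" using insert eq by (auto simp: g'_def)
    finally show ?case using insert assms add_hom by auto
  qed
  have "msum add (zer X Y) (insert x A) f = g' x (Finite_Set.fold g' (zer X Y) A)"
    using eq comp_fun_commute_on.fold_insert[OF cf] assms by auto
  also have "\<dots> = add (f x) (msum add (zer X Y) A f)" using inA[of A, OF subset_insertI] eq[of A, OF subset_insertI] assms by (auto simp: g'_def)
  finally show ?thesis using inA[of A, OF subset_insertI] assms by auto
qed

lemma msum_zero:
  assumes "X \<in> Ob" "Y \<in> Ob" "finite A" "\<forall>a\<in>A. f a = zer X Y"
  shows "msum add (zer X Y) A f = zer X Y"
  using assms(3,4)
proof (induction A rule: finite_induct)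
  case empty then show ?case by (simp add: msum_def)
next
  case (insert b B)
  then show ?case using msum_insert[of X Y B b f] assms zer_hom add_zer by auto
qed

lemma msum_single:
  assumes "X \<in> Ob" "Y \<in> Ob" "finite A" "a \<in> A" "f a \<in> Hom X Y" "\<forall>b\<in>A-{a}. f b = zer X Y"
  shows "msum add (zer X Y) A f = f a"
proof -
  have A: "A = insert a (A - {a})" using assms by auto
  have "msum add (zer X Y) A f = add (f a) (msum add (zer X Y) (A - {a}) f)"
    using msum_insert[of X Y "A - {a}" a f] assms zer_hom A by (metis Diff_iff finite_Diff insertE insertI1)
  also have "\<dots> = f a" using msum_zero[of X Y "A - {a}" f] assms add_zer by auto
  finally show ?thesis .
qed

end


fun hk :: "('a set \<Rightarrow> 'a set \<Rightarrow> bool) \<Rightarrow> nat \<Rightarrow> 'a set \<Rightarrow> bool" where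
  "hk c 0 H = False"
| "hk c (Suc k) H = (if H = {} then False
     else (hk c k (H - {SOME e. e \<in> H}) \<noteq> c (H - {SOME e. e \<in> H}) H))"

lemma hk_step:
  assumes "finite H" "H \<noteq> {}"
  shows "hk c (card H) H = (hk c (card (H - {SOME e. e \<in> H})) (H - {SOME e. e \<in> H}) \<noteq> c (H - {SOME e. e \<in> H}) H)"
proof -
  have m: "(SOME e. e \<in> H) \<in> H" using assms by (simp add: some_in_eq)
  then have eq: "card H = Suc (card (H - {SOME e. e \<in> H}))" using assms
    by (metis card_Suc_Diff1)
  show ?thesis by (subst eq) (simp only: hk.simps(2) if_not_P[OF assms(2)])
qed

lemma cocycle_exact:
  fixes P :: "'a set set" and c :: "'a set \<Rightarrow> 'a set \<Rightarrow> bool"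
  assumes fin: "\<forall>H\<in>P. finite H"
  and down: "\<forall>H\<in>P. \<forall>e\<in>H. H - {e} \<in> P"
  and sq: "\<forall>H\<in>P. \<forall>a\<in>H. \<forall>b\<in>H. a \<noteq> b \<longrightarrow>
     (c (H-{a}-{b}) (H-{a}) \<noteq> c (H-{a}) H) = (c (H-{b}-{a}) (H-{b}) \<noteq> c (H-{b}) H)"
  shows "\<exists>h. \<forall>H\<in>P. \<forall>e\<in>H. h H = (h (H-{e}) \<noteq> c (H-{e}) H)"
proof -
  define h where "h = (\<lambda>H. hk c (card H) H)"
  have main: "\<forall>H. card H = n \<longrightarrow> H \<in> P \<longrightarrow> (\<forall>e\<in>H. h H = (h (H-{e}) \<noteq> c (H-{e}) H))" for n
  proof (induction n rule: less_induct)
    case (less n)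
    show ?case
    proof (intro allI impI ballI)
      fix H e assume Hn: "card H = n" and HP: "H \<in> P" and eH: "e \<in> H"
      define a where "a = (SOME e. e \<in> H)"
      have fH: "finite H" using fin HP by auto
      have aH: "a \<in> H" unfolding a_def by (rule someI[of "\<lambda>x. x \<in> H", OF eH])
      have Hne: "H \<noteq> {}" using eH by auto
      have step: "h H = (h (H - {a}) \<noteq> c (H - {a}) H)"
        unfolding h_def a_def by (rule hk_step[OF fH Hne])
      show "h H = (h (H-{e}) \<noteq> c (H-{e}) H)"
      proof (cases "e = a")
        case True then show ?thesis using step by simp
      next
        case False
        have c1: "card (H - {a}) < n" using card_Diff1_less[OF fH aH] Hn by simp
        have c2: "card (H - {e}) < n" using card_Diff1_less[OF fH eH] Hn by simp
        have P1: "H - {a} \<in> P" using down HP aH by blast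
        have P2: "H - {e} \<in> P" using down HP eH by blast
        have ea: "e \<in> H - {a}" using eH False by auto
        have ae: "a \<in> H - {e}" using aH False by auto
        have IH1: "\<And>x. x \<in> H - {a} \<Longrightarrow> h (H - {a}) = (h (H-{a}-{x}) \<noteq> c (H-{a}-{x}) (H-{a}))"
          by (rule less.IH[OF c1, rule_format, OF refl P1])
        have IH2: "\<And>x. x \<in> H - {e} \<Longrightarrow> h (H - {e}) = (h (H-{e}-{x}) \<noteq> c (H-{e}-{x}) (H-{e}))"
          by (rule less.IH[OF c2, rule_format, OF refl P2])
        have K: "H-{e}-{a} = H-{a}-{e}" by auto
        have i1: "h (H - {a}) = (h (H-{a}-{e}) \<noteq> c (H-{a}-{e}) (H-{a}))"
          using IH1[OF ea] .
        have i2: "h (H - {e}) = (h (H-{a}-{e}) \<noteq> c (H-{a}-{e}) (H-{e}))"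
          using IH2[OF ae] unfolding K .
        have s0: "(c (H-{a}-{e}) (H-{a}) \<noteq> c (H-{a}) H) = (c (H-{e}-{a}) (H-{e}) \<noteq> c (H-{e}) H)"
          using sq[rule_format, OF HP aH eH] False by blast
        have s: "(c (H-{a}-{e}) (H-{a}) \<noteq> c (H-{a}) H) = (c (H-{a}-{e}) (H-{e}) \<noteq> c (H-{e}) H)"
          using s0 unfolding K .
        show ?thesis using step i1 i2 s by argo
      qed
    qed
  qed
  show ?thesis
  proof (intro exI[of _ h] ballI)
    fix H e assume "H \<in> P" "e \<in> H"
    then show "h H = (h (H-{e}) \<noteq> c (H-{e}) H)" by (rule main[of "card H", rule_format, OF refl])
  qed
qed

lemma covers_insert: assumes "x \<notin> K" shows "covers K (insert x K)"
proof -
  have "insert x K - K = {x}" using assms by auto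
  then show ?thesis unfolding covers_def by auto
qed

lemma covers_E: assumes "covers H H'" obtains e where "e \<notin> H" "H' = insert e H"
proof -
  from assms have "card (H' - H) = 1" "H \<subseteq> H'" unfolding covers_def by auto
  then obtain e where "H' - H = {e}" by (metis card_1_singletonE)
  then show ?thesis using that \<open>H \<subseteq> H'\<close> by blast
qed



lemma sq_c:
  assumes "sign_assignment P eps" "sign_assignment P eps'"
    "K \<in> P" "H1 \<in> P" "H2 \<in> P" "H \<in> P" "covers K H1" "covers K H2" "covers H1 H" "covers H2 H" "H1 \<noteq> H2"
  shows "((eps K H1 \<noteq> eps' K H1) \<noteq> (eps H1 H \<noteq> eps' H1 H)) =
         ((eps K H2 \<noteq> eps' K H2) \<noteq> (eps H2 H \<noteq> eps' H2 H))"
proof -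
  have pre: "K \<in> P \<and> H1 \<in> P \<and> H2 \<in> P \<and> H \<in> P \<and>
        covers K H1 \<and> covers K H2 \<and> covers H1 H \<and> covers H2 H \<and> H1 \<noteq> H2"
    using assms(3-) by simp
  have "(eps K H1 \<noteq> eps H1 H) = (\<not> (eps K H2 \<noteq> eps H2 H))"
    using assms(1) unfolding sign_assignment_def
    apply -
    apply (drule spec[of _ K], drule spec[of _ H1], drule spec[of _ H2], drule spec[of _ H])
    apply (drule mp[OF _ pre])
    apply assumption
    done
  moreover have "(eps' K H1 \<noteq> eps' H1 H) = (\<not> (eps' K H2 \<noteq> eps' H2 H))"
    using assms(2) unfolding sign_assignment_def
    apply -
    apply (drule spec[of _ K], drule spec[of _ H1], drule spec[of _ H2], drule spec[of _ H])
    apply (drule mp[OF _ pre])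
    apply assumption
    done
  ultimately show ?thesis by argo
qed

lemma finE: "digraph V E \<Longrightarrow> finite E"
  unfolding digraph_def by (meson finite_SigmaI finite_subset Diff_subset subset_trans)

lemma covers_remove: assumes "x \<in> H" shows "covers (H - {x}) H"
proof -
  have "H = insert x (H - {x})" using assms by auto
  then show ?thesis using covers_insert[of x "H - {x}"] by simp
qed

lemma h_exists:
  assumes dg: "digraph V E" and cl: "down_closed E P \<or> up_closed E P"
    and s1: "sign_assignment P eps" and s2: "sign_assignment P eps'"
  shows "\<exists>h. \<forall>H\<in>P. \<forall>H'\<in>P. covers H H' \<longrightarrow> h H' = (h H \<noteq> (eps H H' \<noteq> eps' H H'))"
proof -
  define c where "c = (\<lambda>A B. eps A B \<noteq> eps' A B)"
  have fE: "finite E" using finE[OF dg] .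
  have PE: "P \<subseteq> Pow E" using cl unfolding down_closed_def up_closed_def by auto
  have sq: "(c K H1 \<noteq> c H1 H) = (c K H2 \<noteq> c H2 H)"
    if "K \<in> P" "H1 \<in> P" "H2 \<in> P" "H \<in> P" "covers K H1" "covers K H2" "covers H1 H" "covers H2 H" "H1 \<noteq> H2"
    for K H1 H2 H
    using sq_c[OF s1 s2 that] unfolding c_def .
  show ?thesis
  proof (cases "down_closed E P")
    case True
    have dc: "\<forall>H H'. H \<subseteq> H' \<and> H' \<in> P \<longrightarrow> H \<in> P"
      using True unfolding down_closed_def by (elim conjE) assumption
    have dn: "\<forall>H\<in>P. \<forall>e\<in>H. H - {e} \<in> P"
    proof (intro ballI)
      fix H e assume HP: "H \<in> P"
      show "H - {e} \<in> P" by (rule dc[THEN spec, THEN spec, THEN mp, OF conjI[OF Diff_subset HP]])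
    qed
    have fin: "\<forall>H\<in>P. finite H"
    proof
      fix H assume "H \<in> P" then have "H \<subseteq> E" using PE by auto
      then show "finite H" using fE by (rule finite_subset)
    qed
    have "\<exists>h. \<forall>H\<in>P. \<forall>e\<in>H. h H = (h (H-{e}) \<noteq> c (H-{e}) H)"
    proof (rule cocycle_exact[OF fin dn], intro ballI impI)
      fix H a b assume HP: "H \<in> P" and ab: "a \<in> H" "b \<in> H" "a \<noteq> b"
      have e5: "H-{b}-{a} = H-{a}-{b}" by auto
      have ba: "b \<in> H - {a}" "a \<in> H - {b}" using ab by auto
      have cv: "covers (H-{a}-{b}) (H-{a})" "covers (H-{a}-{b}) (H-{b})"
        "covers (H-{a}) H" "covers (H-{b}) H"
        using covers_remove[OF ba(1)] covers_remove[OF ba(2)] covers_remove[OF ab(1)] covers_remove[OF ab(2)]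
        unfolding e5 by auto
      have ps1: "H-{a} \<in> P" using bspec[OF bspec[OF dn HP] ab(1)] .
      have ps2: "H-{b} \<in> P" using bspec[OF bspec[OF dn HP] ab(2)] .
      have ps3: "H-{a}-{b} \<in> P" using bspec[OF bspec[OF dn ps1] ba(1)] .
      note ps = ps1 ps2 ps3
      have ne: "H-{a} \<noteq> H-{b}" using ab by auto
      show "(c (H-{a}-{b}) (H-{a}) \<noteq> c (H-{a}) H) = (c (H-{b}-{a}) (H-{b}) \<noteq> c (H-{b}) H)"
        using sq[OF ps(3) ps(1) ps(2) HP cv ne] unfolding e5 .
    qed
    then obtain h where h: "\<forall>H\<in>P. \<forall>e\<in>H. h H = (h (H-{e}) \<noteq> c (H-{e}) H)" by blast
    show ?thesis
    proof (intro exI[of _ h] ballI impI)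
      fix H H' assume "H \<in> P" "H' \<in> P" "covers H H'"
      then obtain e where e: "e \<notin> H" "H' = insert e H" using covers_E by metis
      have eH': "e \<in> H'" and r: "H' - {e} = H" using e by auto
      have "h H' = (h (H'-{e}) \<noteq> c (H'-{e}) H')" using bspec[OF bspec[OF h \<open>H' \<in> P\<close>] eH'] .
      then show "h H' = (h H \<noteq> (eps H H' \<noteq> eps' H H'))"
        unfolding r c_def .
    qed
  next
    case False
    then have up: "up_closed E P" using cl by auto
    define Q where "Q = (\<lambda>H. E - H) ` P"
    define c' where "c' = (\<lambda>A B. c (E - B) (E - A))"
    have fin: "\<forall>H\<in>Q. finite H" using fE unfolding Q_def by auto
    have dn: "\<forall>A\<in>Q. \<forall>e\<in>A. A - {e} \<in> Q"
    proof (intro ballI)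
      fix A e assume "A \<in> Q" "e \<in> A"
      then obtain H where H: "H \<in> P" "A = E - H" unfolding Q_def by auto
      have "insert e H \<in> P" using up H \<open>e \<in> A\<close> PE unfolding up_closed_def by blast
      moreover have "A - {e} = E - insert e H" using H by auto
      ultimately show "A - {e} \<in> Q" unfolding Q_def by auto
    qed
    have "\<exists>h. \<forall>A\<in>Q. \<forall>e\<in>A. h A = (h (A-{e}) \<noteq> c' (A-{e}) A)"
    proof (rule cocycle_exact[OF fin dn], intro ballI impI)
      fix A a b assume AQ: "A \<in> Q" and ab: "a \<in> A" "b \<in> A" "a \<noteq> b"
      then obtain H where H: "H \<in> P" "A = E - H" unfolding Q_def by auto
      have HE: "H \<subseteq> E" using H PE by auto
      have e1: "E - (A - {a}) = insert a H" "E - (A - {b}) = insert b H"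
         "E - (A-{a}-{b}) = insert a (insert b H)" "E - (A-{b}-{a}) = insert a (insert b H)"
         "E - A = H" "insert b (insert a H) = insert a (insert b H)"
        using H HE ab by auto
      have upr: "\<And>K. H \<subseteq> K \<Longrightarrow> K \<subseteq> E \<Longrightarrow> K \<in> P"
        using up H(1) unfolding up_closed_def by blast
      have abE: "a \<in> E" "b \<in> E" using ab H by auto
      have ps: "insert a H \<in> P" "insert b H \<in> P" "insert a (insert b H) \<in> P"
        using upr[of "insert a H"] upr[of "insert b H"] upr[of "insert a (insert b H)"] HE abE by auto
      have nab: "a \<notin> H" "b \<notin> H" using H ab by auto
      have cv: "covers H (insert a H)" "covers H (insert b H)"
        "covers (insert a H) (insert a (insert b H))" "covers (insert b H) (insert a (insert b H))"
        using covers_insert[of a H] covers_insert[of b H] covers_insert[of b "insert a H"]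
          covers_insert[of a "insert b H"] nab ab e1(6) by auto
      have ne: "insert a H \<noteq> insert b H" using nab ab by auto
      show "(c' (A-{a}-{b}) (A-{a}) \<noteq> c' (A-{a}) A) = (c' (A-{b}-{a}) (A-{b}) \<noteq> c' (A-{b}) A)"
        using sq[OF H(1) ps(1) ps(2) ps(3) cv ne] e1 unfolding c'_def by auto
    qed
    then obtain h' where h': "\<forall>A\<in>Q. \<forall>e\<in>A. h' A = (h' (A-{e}) \<noteq> c' (A-{e}) A)" by blast
    show ?thesis
    proof (intro exI[of _ "\<lambda>H. h' (E - H)"] ballI impI)
      fix H H' assume HP: "H \<in> P" "H' \<in> P" "covers H H'"
      then obtain e where e: "e \<notin> H" "H' = insert e H" using covers_E by metis
      have eE: "e \<in> E" using HP(2) PE e by auto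
      have HE: "H \<subseteq> E" using HP PE by auto
      have AQ: "E - H \<in> Q" using HP unfolding Q_def by auto
      have r: "E - H - {e} = E - H'" "E - (E - H') = H'" "E - (E - H) = H" using e HE eE HP(2) PE by auto
      have eA: "e \<in> E - H" using e eE by auto
      have "h' (E - H) = (h' (E - H - {e}) \<noteq> c' (E - H - {e}) (E - H))"
        using bspec[OF bspec[OF h' AQ] eA] .
      then have "h' (E - H) = (h' (E - H') \<noteq> c H H')"
        unfolding c'_def r .
      then show "h' (E - H') = (h' (E - H) \<noteq> (eps H H' \<noteq> eps' H H'))"
        unfolding c_def by argo
    qed
  qed
qed



theorem corollary3p18:
  fixes V :: "'v set" and E :: "('v \<times> 'v) set" and P :: "('v \<times> 'v) set set"
    and Ob :: "'o set" and Hom :: "'o \<Rightarrow> 'o \<Rightarrow> 'm set" and cmp :: "'m \<Rightarrow> 'm \<Rightarrow> 'm"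
    and idn :: "'o \<Rightarrow> 'm" and zer :: "'o \<Rightarrow> 'o \<Rightarrow> 'm" and add :: "'m \<Rightarrow> 'm \<Rightarrow> 'm"
    and neg :: "'m \<Rightarrow> 'm"
    and Fo :: "('v \<times> 'v) set \<Rightarrow> 'o" and Fm :: "('v \<times> 'v) set \<Rightarrow> ('v \<times> 'v) set \<Rightarrow> 'm"
    and eps eps' :: "('v \<times> 'v) set \<Rightarrow> ('v \<times> 'v) set \<Rightarrow> bool"
  assumes "digraph V E"
    and "down_closed E P \<or> up_closed E P"
    and "additive_category Ob Hom cmp idn zer add neg"
    and "functor_on P Ob Hom cmp idn Fo Fm"
    and "sign_assignment P eps"
    and "sign_assignment P eps'"
  shows "\<exists>f g :: nat \<Rightarrow> ('v \<times> 'v) set \<Rightarrow> ('v \<times> 'v) set \<Rightarrow> 'm. \<forall>n.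
     (\<forall>H\<in>deg P n. \<forall>H'\<in>deg P n.
        f n H' H \<in> Hom (Fo H) (Fo H') \<and> g n H' H \<in> Hom (Fo H) (Fo H'))
   \<and> (\<forall>H\<in>deg P n. \<forall>H'\<in>deg P n.
        mcomp cmp add zer Fo P n (g n) (f n) H' H = idm idn zer Fo H' H \<and>
        mcomp cmp add zer Fo P n (f n) (g n) H' H = idm idn zer Fo H' H)
   \<and> (\<forall>H\<in>deg P n. \<forall>H'\<in>deg P (Suc n).
        mcomp cmp add zer Fo P n (diffm neg zer Fo Fm eps') (f n) H' H =
        mcomp cmp add zer Fo P (Suc n) (f (Suc n)) (diffm neg zer Fo Fm eps) H' H)"
proof -
  interpret addcat Ob Hom cmp idn zer add neg using assms(3) by unfold_locales
  obtain h where h: "\<forall>H\<in>P. \<forall>H'\<in>P. covers H H' \<longrightarrow> h H' = (h H \<noteq> (eps H H' \<noteq> eps' H H'))"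
    using h_exists[OF assms(1,2,5,6)] by blast
  have F1: "\<forall>H\<in>P. Fo H \<in> Ob \<and> Fm H H = idn (Fo H)"
    using assms(4) unfolding functor_on_def by (elim conjE) assumption
  have F2: "\<forall>H\<in>P. \<forall>H'\<in>P. H \<subseteq> H' \<longrightarrow> Fm H H' \<in> Hom (Fo H) (Fo H')"
    using assms(4) unfolding functor_on_def by (elim conjE) assumption
  have FO: "Fo H \<in> Ob" if "H \<in> P" for H using bspec[OF F1 that] by simp
  have FM: "Fm H H' \<in> Hom (Fo H) (Fo H')" if "H \<in> P" "H' \<in> P" "H \<subseteq> H'" for H H'
    using bspec[OF bspec[OF F2 that(1)] that(2)] that(3) by simp
  have PE: "P \<subseteq> Pow E" using assms(2) unfolding down_closed_def up_closed_def by auto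
  have fE: "finite E" using finE[OF assms(1)] .
  have degP: "deg P n \<subseteq> P" for n unfolding deg_def by auto
  have fP: "finite P" using PE fE by (meson finite_Pow_iff finite_subset)
  have fdeg: "finite (deg P n)" for n
    using degP[of n] fP by (rule finite_subset)
  define sg where "sg = (\<lambda>b X. if b then neg (idn X) else idn X)"
  have sg_hom: "sg b X \<in> Hom X X" if "X \<in> Ob" for b X
    using that idn_hom neg_hom unfolding sg_def by auto
  have sg_l: "cmp (sg b Y) u = (if b then neg u else u)" if "X \<in> Ob" "Y \<in> Ob" "u \<in> Hom X Y" for b X Y u
    using that idn_hom cmp_neg_l[of X Y Y u "idn Y"] idn_l unfolding sg_def by auto
  have sg_r: "cmp u (sg b X) = (if b then neg u else u)" if "X \<in> Ob" "Y \<in> Ob" "u \<in> Hom X Y" for b X Y u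
    using that idn_hom cmp_neg_r[of X X Y "idn X" u] idn_r unfolding sg_def by auto
  have sg_sq: "cmp (sg b X) (sg b X) = idn X" if "X \<in> Ob" for b X
    using sg_l[OF that that sg_hom[OF that], of b b] neg_neg[OF that that idn_hom[OF that]]
    unfolding sg_def by auto
  have dhom: "diffm neg zer Fo Fm e H' H \<in> Hom (Fo H) (Fo H')" if "H \<in> P" "H' \<in> P" for e H H'
    using that FM FO neg_hom zer_hom unfolding diffm_def covers_def by auto
  define f where "f = (\<lambda>(n::nat) H' H. if H' = H then sg (h H) (Fo H) else zer (Fo H) (Fo H'))"
  have fhom: "f n H' H \<in> Hom (Fo H) (Fo H')" if "H \<in> P" "H' \<in> P" for n H H'
    using that FO sg_hom zer_hom unfolding f_def by auto
  have ff: "mcomp cmp add zer Fo P n (f n) (f n) H' H = idm idn zer Fo H' H"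
    if "H \<in> deg P n" "H' \<in> deg P n" for n H H'
  proof -
    have HP: "H \<in> P" "H' \<in> P" using that degP by auto
    have z: "\<forall>b\<in>deg P n - {H}. cmp (f n H' b) (f n b H) = zer (Fo H) (Fo H')"
    proof
      fix b assume b: "b \<in> deg P n - {H}"
      then have bP: "b \<in> P" using degP by auto
      have "f n b H = zer (Fo H) (Fo b)" using b by (simp add: f_def)
      then show "cmp (f n H' b) (f n b H) = zer (Fo H) (Fo H')"
        using cmp_zer_r[OF FO[OF HP(1)] FO[OF bP] FO[OF HP(2)] fhom[OF bP HP(2)]] by simp
    qed
    have t: "cmp (f n H' H) (f n H H) \<in> Hom (Fo H) (Fo H')"
      using cmp_hom[OF FO[OF HP(1)] FO[OF HP(1)] FO[OF HP(2)] fhom[OF HP(1) HP(1)] fhom[OF HP(1) HP(2)]] .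
    have m: "mcomp cmp add zer Fo P n (f n) (f n) H' H = cmp (f n H' H) (f n H H)"
      unfolding mcomp_def
      using msum_single[where X="Fo H" and Y="Fo H'" and A="deg P n" and f="\<lambda>K. cmp (f n H' K) (f n K H)" and a=H]
        FO[OF HP(1)] FO[OF HP(2)] fdeg[of n] that(1) t z by simp
    show ?thesis
    proof (cases "H' = H")
      case True
      then show ?thesis using m sg_sq[OF FO[OF HP(1)]] by (simp add: f_def idm_def)
    next
      case False
      then show ?thesis using m cmp_zer_l[OF FO[OF HP(1)] FO[OF HP(1)] FO[OF HP(2)] sg_hom[OF FO[OF HP(1)]]]
        by (simp add: f_def idm_def)
    qed
  qed
  have dd: "mcomp cmp add zer Fo P n (diffm neg zer Fo Fm eps') (f n) H' H =
        mcomp cmp add zer Fo P (Suc n) (f (Suc n)) (diffm neg zer Fo Fm eps) H' H"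
    if "H \<in> deg P n" "H' \<in> deg P (Suc n)" for n H H'
  proof -
    have HP: "H \<in> P" "H' \<in> P" using that degP by auto
    have z1: "\<forall>b\<in>deg P n - {H}. cmp (diffm neg zer Fo Fm eps' H' b) (f n b H) = zer (Fo H) (Fo H')"
    proof
      fix b assume b: "b \<in> deg P n - {H}"
      then have bP: "b \<in> P" using degP by auto
      have "f n b H = zer (Fo H) (Fo b)" using b by (simp add: f_def)
      then show "cmp (diffm neg zer Fo Fm eps' H' b) (f n b H) = zer (Fo H) (Fo H')"
        using cmp_zer_r[OF FO[OF HP(1)] FO[OF bP] FO[OF HP(2)] dhom[OF bP HP(2)]] by simp
    qed
    have t1: "cmp (diffm neg zer Fo Fm eps' H' H) (f n H H) \<in> Hom (Fo H) (Fo H')"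
      using cmp_hom[OF FO[OF HP(1)] FO[OF HP(1)] FO[OF HP(2)] fhom[OF HP(1) HP(1)] dhom[OF HP(1) HP(2)]] .
    have L0: "mcomp cmp add zer Fo P n (diffm neg zer Fo Fm eps') (f n) H' H
        = cmp (diffm neg zer Fo Fm eps' H' H) (f n H H)"
      unfolding mcomp_def
      using msum_single[where X="Fo H" and Y="Fo H'" and A="deg P n" and f="\<lambda>K. cmp (diffm neg zer Fo Fm eps' H' K) (f n K H)" and a=H]
        FO[OF HP(1)] FO[OF HP(2)] fdeg[of n] that(1) t1 z1 by simp
    have L: "mcomp cmp add zer Fo P n (diffm neg zer Fo Fm eps') (f n) H' H
        = cmp (diffm neg zer Fo Fm eps' H' H) (sg (h H) (Fo H))"
      using L0 by (simp add: f_def)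
    have z2: "\<forall>b\<in>deg P (Suc n) - {H'}. cmp (f (Suc n) H' b) (diffm neg zer Fo Fm eps b H) = zer (Fo H) (Fo H')"
    proof
      fix b assume b: "b \<in> deg P (Suc n) - {H'}"
      then have bP: "b \<in> P" using degP by auto
      have "H' \<noteq> b" using b by auto
      then have "f (Suc n) H' b = zer (Fo b) (Fo H')" by (simp add: f_def)
      then show "cmp (f (Suc n) H' b) (diffm neg zer Fo Fm eps b H) = zer (Fo H) (Fo H')"
        using cmp_zer_l[OF FO[OF HP(1)] FO[OF bP] FO[OF HP(2)] dhom[OF HP(1) bP]] by simp
    qed
    have t2: "cmp (f (Suc n) H' H') (diffm neg zer Fo Fm eps H' H) \<in> Hom (Fo H) (Fo H')"
      using cmp_hom[OF FO[OF HP(1)] FO[OF HP(2)] FO[OF HP(2)] dhom[OF HP(1) HP(2)] fhom[OF HP(2) HP(2)]] .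
    have R0: "mcomp cmp add zer Fo P (Suc n) (f (Suc n)) (diffm neg zer Fo Fm eps) H' H
        = cmp (f (Suc n) H' H') (diffm neg zer Fo Fm eps H' H)"
      unfolding mcomp_def
      using msum_single[where X="Fo H" and Y="Fo H'" and A="deg P (Suc n)" and f="\<lambda>K. cmp (f (Suc n) H' K) (diffm neg zer Fo Fm eps K H)" and a=H']
        FO[OF HP(1)] FO[OF HP(2)] fdeg[of "Suc n"] that(2) t2 z2 by simp
    have R: "mcomp cmp add zer Fo P (Suc n) (f (Suc n)) (diffm neg zer Fo Fm eps) H' H
        = cmp (sg (h H') (Fo H')) (diffm neg zer Fo Fm eps H' H)"
      using R0 by (simp add: f_def)
    have FH: "Fo H \<in> Ob" and FH': "Fo H' \<in> Ob" using FO HP by auto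
    show ?thesis
    proof (cases "covers H H'")
      case True
      have sub: "H \<subseteq> H'" using True unfolding covers_def by auto
      have hh: "h H' = (h H \<noteq> (eps H H' \<noteq> eps' H H'))" using h HP True by blast
      have m: "Fm H H' \<in> Hom (Fo H) (Fo H')" using FM HP sub by auto
      have nm: "neg (Fm H H') \<in> Hom (Fo H) (Fo H')" using neg_hom[OF FH FH' m] .
      have nn: "neg (neg (Fm H H')) = Fm H H'" using neg_neg[OF FH FH' m] .
      have d1: "diffm neg zer Fo Fm eps' H' H = (if eps' H H' then neg (Fm H H') else Fm H H')"
        using True by (simp add: diffm_def)
      have d2: "diffm neg zer Fo Fm eps H' H = (if eps H H' then neg (Fm H H') else Fm H H')"
        using True by (simp add: diffm_def)
      show ?thesis unfolding L R d1 d2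
        using hh sg_l[OF FH FH' m] sg_r[OF FH FH' m] sg_l[OF FH FH' nm] sg_r[OF FH FH' nm] nn
        by (cases "h H"; cases "eps H H'"; cases "eps' H H'") simp_all
    next
      case False
      have d1: "diffm neg zer Fo Fm eps' H' H = zer (Fo H) (Fo H')"
        and d2: "diffm neg zer Fo Fm eps H' H = zer (Fo H) (Fo H')"
        using False by (simp_all add: diffm_def)
      show ?thesis unfolding L R d1 d2
        using cmp_zer_l[OF FH FH FH' sg_hom[OF FH]] cmp_zer_r[OF FH FH' FH' sg_hom[OF FH']] by simp
    qed
  qed
  show ?thesis
  proof (rule exI[of _ f], rule exI[of _ f], intro allI conjI ballI)
    fix n H H' assume a: "H \<in> deg P n" "H' \<in> deg P n"
    then show "f n H' H \<in> Hom (Fo H) (Fo H')" using fhom degP by blast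
    then show "f n H' H \<in> Hom (Fo H) (Fo H')" .
    show "mcomp cmp add zer Fo P n (f n) (f n) H' H = idm idn zer Fo H' H" by (rule ff[OF a])
    then show "mcomp cmp add zer Fo P n (f n) (f n) H' H = idm idn zer Fo H' H" .
  next
    fix n H H' assume a: "H \<in> deg P n" "H' \<in> deg P (Suc n)"
    show "mcomp cmp add zer Fo P n (diffm neg zer Fo Fm eps') (f n) H' H =
        mcomp cmp add zer Fo P (Suc n) (f (Suc n)) (diffm neg zer Fo Fm eps) H' H" by (rule dd[OF a])
  qed
qed


end
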